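(* Let $(\alpha_1,\alpha_2)\in\mathbb{C}^2$ and $p_1,p_2\in\mathbb{C}[u]\setminus\{0\}$. (i) $\mathcal{A}_{\alpha_1,\alpha_2}(p_1,p_2)\simeq\mathcal{A}_{\alpha_2,\alpha_1}(p_2,p_1)$. (ii) If $\psi(u)=\gamma u+\gamma_0$ with $\gamma\in\mathbb{C}\setminus\{0\}$ and $\gamma_0\in\mathbb{C}$, then $\mathcal{A}_{\alpha_1,\alpha_2}(p_1\circ\psi,p_2\circ\psi)\simeq\mathcal{A}_{\gamma\alpha_1,\gamma\alpha_2}(p_1,p_2)$.
   Context: $\tilde{\mathcal{A}}_{\alpha_1,\alpha_2}(p_1,p_2)$ is the $\mathbb{C}$-algebra generated by $H,X_1^\pm,X_2^\pm$ with relations ($i=1,2$) $HX_i^\pm-X_i^\pm H=\pm\alpha_iX_i^\pm$, $X_i^+X_i^-=p_i(H-\alpha_i/2)$, $X_i^-X_i^+=p_i(H+\alpha_i/2)$, $X_1^+X_2^-=X_2^-X_1^+$, $X_1^-X_2^+=X_2^+X_1^-$; the noncommutative Kleinian fiber product $\mathcal{A}_{\alpha_1,\alpha_2}(p_1,p_2)$ is its quotient by the ideal of all $a$ with $f(H)a=0$ for some nonzero polynomial $f$. *)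

theory Defs
  imports "HOL-Algebra.QuotRing" "HOL-Computational_Algebra.Polynomial" "HOL-Library.Poly_Mapping"
begin

datatype gen = GH | GXp1 | GXm1 | GXp2 | GXm2

datatype word = Word "gen list"

instantiation word :: monoid_add
begin
definition zero_word :: word where "zero_word = Word []"
fun plus_word :: "word \<Rightarrow> word \<Rightarrow> word" where
  "plus_word (Word a) (Word b) = Word (a @ b)"
instance
proof
  fix a b c :: word
  show "a + b + c = a + (b + c)" by (cases a; cases b; cases c) simp
  show "0 + a = a" by (cases a) (simp add: zero_word_def)
  show "a + 0 = a" by (cases a) (simp add: zero_word_def)
qed
end

text \<open>The free algebra C<H,X1+,X1-,X2+,X2->: finitely supported functions words -> C
  with convolution product (a ring_1 by Poly_Mapping).\<close>
type_synonym freealg = "word \<Rightarrow>\<^sub>0 complex"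

definition FR :: "freealg ring" where
  "FR = \<lparr>carrier = UNIV, Group.monoid.mult = (*), one = 1, zero = 0, add = (+)\<rparr>"

definition gen_el :: "gen \<Rightarrow> freealg" where
  "gen_el g = Poly_Mapping.single (Word [g]) 1"

definition embC :: "complex \<Rightarrow> freealg" where
  "embC c = Poly_Mapping.single 0 c"

definition peval :: "complex poly \<Rightarrow> freealg \<Rightarrow> freealg" where
  "peval p x = (\<Sum>i\<le>degree p. embC (coeff p i) * x ^ i)"

abbreviation "Hg \<equiv> gen_el GH"

text \<open>Defining relations of the algebra tilde-A_{a1,a2}(p1,p2), written as elements r (meaning r = 0).\<close>
definition rels :: "complex \<Rightarrow> complex \<Rightarrow> complex poly \<Rightarrow> complex poly \<Rightarrow> freealg set" where
  "rels a1 a2 p1 p2 =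
    (\<Union>(a, p, Xp, Xm) \<in> {(a1, p1, gen_el GXp1, gen_el GXm1), (a2, p2, gen_el GXp2, gen_el GXm2)}.
       { Hg * Xp - Xp * Hg - embC a * Xp,
         Hg * Xm - Xm * Hg + embC a * Xm,
         Xp * Xm - peval p (Hg - embC (a / 2)),
         Xm * Xp - peval p (Hg + embC (a / 2)) })
    \<union> { gen_el GXp1 * gen_el GXm2 - gen_el GXm2 * gen_el GXp1,
        gen_el GXm1 * gen_el GXp2 - gen_el GXp2 * gen_el GXm1 }"

definition relideal :: "complex \<Rightarrow> complex \<Rightarrow> complex poly \<Rightarrow> complex poly \<Rightarrow> freealg set" where
  "relideal a1 a2 p1 p2 = genideal FR (rels a1 a2 p1 p2)"

text \<open>Preimage in the free algebra of the ideal of H-torsion elements of tilde-A: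
  all a with f(H) a = 0 in tilde-A for some nonzero polynomial f (taken as the ideal
  generated by these elements, which equals this set since the paper asserts it is an ideal).\<close>
definition torsideal :: "complex \<Rightarrow> complex \<Rightarrow> complex poly \<Rightarrow> complex poly \<Rightarrow> freealg set" where
  "torsideal a1 a2 p1 p2 =
     genideal FR {a. \<exists>f. f \<noteq> 0 \<and> peval f Hg * a \<in> relideal a1 a2 p1 p2}"

definition KFP :: "complex \<Rightarrow> complex \<Rightarrow> complex poly \<Rightarrow> complex poly \<Rightarrow> freealg set ring" where
  "KFP a1 a2 p1 p2 = FR Quot torsideal a1 a2 p1 p2"

text \<open>Isomorphism of C-algebras between quotients F/I and F/J of the free algebra:
  a ring isomorphism that is the identity on scalars (hence C-linear).\<close>
definition alg_iso_quot :: "freealg set \<Rightarrow> freealg set \<Rightarrow> bool" where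
  "alg_iso_quot I J \<longleftrightarrow>
     (\<exists>\<phi> \<in> ring_iso (FR Quot I) (FR Quot J).
        \<forall>c. \<phi> (I +>\<^bsub>FR\<^esub> embC c) = J +>\<^bsub>FR\<^esub> embC c)"

end

theory Submission
  imports Defs
begin


lemma pm_expand: "(f::freealg) = (\<Sum>w\<in>Poly_Mapping.keys f. Poly_Mapping.single w (Poly_Mapping.lookup f w))"
  by (rule poly_mapping_eqI) (auto simp: lookup_sum lookup_single when_def in_keys_iff)

lemma pm_induct:
  assumes "P 0" "\<And>w c. P (Poly_Mapping.single w c)" "\<And>f g. P f \<Longrightarrow> P g \<Longrightarrow> P (f + g)"
  shows "P (f::freealg)"
proof -
  have "P (\<Sum>w\<in>A. Poly_Mapping.single w (Poly_Mapping.lookup f w))" if "finite A" for A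
    using that by (induction A rule: finite_induct) (auto intro: assms)
  then show ?thesis by (subst pm_expand) simp
qed

lemma embC_0[simp]: "embC 0 = 0" by (simp add: embC_def)
lemma embC_1[simp]: "embC 1 = 1" by (simp add: embC_def)
lemma embC_add: "embC (a + b) = embC a + embC b" by (simp add: embC_def single_add)
lemma embC_diff: "embC (a - b) = embC a - embC b" by (simp add: embC_def single_diff)
lemma embC_uminus: "embC (- b) = - embC b" by (simp add: embC_def single_uminus)
lemma embC_mult: "embC (a * b) = embC a * embC b" by (simp add: embC_def mult_single)

lemma embC_comm: "embC c * x = x * embC c"
proof (induction x rule: pm_induct)
  case (3 f g) then show ?case by (simp add: algebra_simps)
qed (simp_all add: embC_def mult_single mult.commute)

fun wm :: "(gen \<Rightarrow> freealg) \<Rightarrow> word \<Rightarrow> freealg" where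
  "wm s (Word gs) = prod_list (map s gs)"

lemma wm_add: "wm s (v + w) = wm s v * wm s w"
  by (cases v; cases w) simp

lemma wm_0[simp]: "wm s 0 = 1" by (simp add: zero_word_def)

definition ext :: "(gen \<Rightarrow> freealg) \<Rightarrow> freealg \<Rightarrow> freealg" where
  "ext s f = (\<Sum>w\<in>Poly_Mapping.keys f. embC (Poly_Mapping.lookup f w) * wm s w)"

lemma ext_superset: "finite S \<Longrightarrow> Poly_Mapping.keys f \<subseteq> S \<Longrightarrow>
   ext s f = (\<Sum>w\<in>S. embC (Poly_Mapping.lookup f w) * wm s w)"
  unfolding ext_def by (rule sum.mono_neutral_left) (auto simp: in_keys_iff)

lemma ext_add: "ext s (f + g) = ext s f + ext s g"
proof -
  let ?S = "Poly_Mapping.keys f \<union> Poly_Mapping.keys g"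
  have "ext s (f + g) = (\<Sum>w\<in>?S. embC (Poly_Mapping.lookup (f+g) w) * wm s w)"
    by (rule ext_superset) (auto simp: keys_add)
  also have "\<dots> = (\<Sum>w\<in>?S. embC (Poly_Mapping.lookup f w) * wm s w) + (\<Sum>w\<in>?S. embC (Poly_Mapping.lookup g w) * wm s w)"
    by (simp add: lookup_add embC_add algebra_simps sum.distrib)
  also have "\<dots> = ext s f + ext s g"
    using ext_superset[of ?S f s] ext_superset[of ?S g s] by simp
  finally show ?thesis .
qed

lemma ext_0[simp]: "ext s 0 = 0" by (simp add: ext_def)

lemma ext_single: "ext s (Poly_Mapping.single w c) = embC c * wm s w"
  by (cases "c = 0") (simp_all add: ext_def)

lemma ext_mult: "ext s (f * g) = ext s f * ext s g"
proof (induction f arbitrary: g rule: pm_induct)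
  case (2 v c)
  show ?case
  proof (induction g rule: pm_induct)
    case (2 w d)
    have "embC (c * d) * wm s (v + w) = embC c * wm s v * (embC d * wm s w)"
      by (simp add: embC_mult wm_add mult.assoc) (metis embC_comm mult.assoc)
    then show ?case by (simp add: mult_single ext_single)
  next
    case (3 f g) then show ?case by (simp add: distrib_left ext_add)
  qed simp
next
  case (3 f1 f2) then show ?case by (simp add: distrib_right ext_add)
qed simp

lemma ext_embC[simp]: "ext s (embC c) = embC c"
  by (simp add: embC_def ext_single)

lemma ext_gen[simp]: "ext s (gen_el g) = s g"
  by (simp add: gen_el_def ext_single)

definition ahom :: "(freealg \<Rightarrow> freealg) \<Rightarrow> bool" where
  "ahom h \<longleftrightarrow> (\<forall>x y. h (x + y) = h x + h y) \<and> (\<forall>x y. h (x * y) = h x * h y) \<and> (\<forall>c. h (embC c) = embC c)"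

lemma ahom_ext: "ahom (ext s)"
  by (simp add: ahom_def ext_add ext_mult)

lemma single_word: "Poly_Mapping.single (Word gs) c = embC c * prod_list (map gen_el gs)"
proof (induction gs arbitrary: c)
  case Nil then show ?case by (simp add: embC_def zero_word_def[symmetric])
next
  case (Cons g gs)
  have "Poly_Mapping.single (Word (g # gs)) c = gen_el g * Poly_Mapping.single (Word gs) c"
    by (simp add: gen_el_def mult_single)
  also have "\<dots> = embC c * prod_list (map gen_el (g # gs))"
    using Cons by (simp add: embC_comm mult.assoc)
  finally show ?case .
qed

lemma ahom_add: "ahom h \<Longrightarrow> h (x + y) = h x + h y" by (simp add: ahom_def)
lemma ahom_mult: "ahom h \<Longrightarrow> h (x * y) = h x * h y" by (simp add: ahom_def)
lemma ahom_embC: "ahom h \<Longrightarrow> h (embC c) = embC c" by (simp add: ahom_def)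
lemma ahom_0: "ahom h \<Longrightarrow> h 0 = 0" using ahom_embC[of h 0] by simp
lemma ahom_1: "ahom h \<Longrightarrow> h 1 = 1" using ahom_embC[of h 1] by simp
lemma ahom_uminus: "ahom h \<Longrightarrow> h (- x) = - h x"
  using ahom_add[of h x "-x"] ahom_0[of h] by (simp add: add_eq_0_iff)
lemma ahom_diff: "ahom h \<Longrightarrow> h (x - y) = h x - h y"
  using ahom_add[of h x "-y"] ahom_uminus[of h y] by simp
lemma ahom_sum: "ahom h \<Longrightarrow> h (sum f A) = (\<Sum>a\<in>A. h (f a))"
  by (induction A rule: infinite_finite_induct) (simp_all add: ahom_0 ahom_add)
lemma ahom_prod_list: "ahom h \<Longrightarrow> h (prod_list xs) = prod_list (map h xs)"
  by (induction xs) (simp_all add: ahom_1 ahom_mult)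
lemma ahom_power: "ahom h \<Longrightarrow> h (x ^ n) = h x ^ n"
  by (induction n) (simp_all add: ahom_1 ahom_mult)

lemma ahom_id:
  assumes "ahom h" "\<And>g. h (gen_el g) = gen_el g"
  shows "h x = x"
proof (induction x rule: pm_induct)
  case 1 then show ?case using assms by (simp add: ahom_0)
next
  case (2 w c)
  obtain gs where "w = Word gs" by (cases w)
  then show ?case using assms
    by (simp add: single_word ahom_mult ahom_embC ahom_prod_list comp_def)
next
  case (3 f g) then show ?case using assms by (simp add: ahom_add)
qed

lemma ahom_comp: "ahom f \<Longrightarrow> ahom g \<Longrightarrow> ahom (f \<circ> g)"
  by (simp add: ahom_def)


lemma peval_superset: "degree p \<le> n \<Longrightarrow> peval p x = (\<Sum>i\<le>n. embC (coeff p i) * x ^ i)"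
  unfolding peval_def by (rule sum.mono_neutral_left) (auto simp: coeff_eq_0)

lemma peval_0[simp]: "peval 0 x = 0" by (simp add: peval_def)

lemma peval_pCons: "peval (pCons a p) x = embC a + x * peval p x"
proof -
  have "peval (pCons a p) x = (\<Sum>i\<le>Suc (degree p). embC (coeff (pCons a p) i) * x ^ i)"
    by (rule peval_superset) (simp add: degree_pCons_le)
  also have "\<dots> = embC a + (\<Sum>i\<le>degree p. embC (coeff p i) * x ^ Suc i)"
    by (subst sum.atMost_Suc_shift) (simp del: sum.atMost_Suc)
  also have "(\<Sum>i\<le>degree p. embC (coeff p i) * x ^ Suc i) = x * peval p x"
    unfolding peval_def sum_distrib_left
    by (rule sum.cong) (simp_all, metis embC_comm mult.assoc)
  finally show ?thesis .
qed

lemma peval_add: "peval (p + q) x = peval p x + peval q x"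
proof -
  let ?n = "max (degree p) (degree q)"
  have "peval (p + q) x = (\<Sum>i\<le>?n. embC (coeff (p+q) i) * x ^ i)"
    by (rule peval_superset) (simp add: degree_add_le)
  also have "\<dots> = (\<Sum>i\<le>?n. embC (coeff p i) * x ^ i) + (\<Sum>i\<le>?n. embC (coeff q i) * x ^ i)"
    by (simp add: embC_add algebra_simps sum.distrib)
  also have "\<dots> = peval p x + peval q x"
    using peval_superset[of p ?n x] peval_superset[of q ?n x] by simp
  finally show ?thesis .
qed

lemma embC_comm2: "x * (embC c * y) = embC c * (x * y)"
  by (metis embC_comm mult.assoc)

lemma peval_smult: "peval (smult c p) x = embC c * peval p x"
  by (induction p) (simp_all add: peval_pCons embC_mult distrib_left embC_comm2 mult.assoc)

lemma peval_const: "peval [:c:] x = embC c"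
  by (simp add: peval_pCons)

lemma peval_mult: "peval (p * q) x = peval p x * peval q x"
  by (induction p) (simp_all add: peval_pCons peval_add peval_smult distrib_right mult.assoc)

lemma peval_pcompose: "peval (pcompose p q) x = peval p (peval q x)"
  by (induction p) (simp_all add: pcompose_pCons peval_pCons peval_add peval_mult peval_const)

lemma peval_linear: "peval [:c0, c1:] x = embC c0 + x * embC c1"
  by (simp add: peval_pCons)

lemma ahom_peval: "ahom h \<Longrightarrow> h (peval p x) = peval p (h x)"
  by (simp add: peval_def ahom_sum ahom_mult ahom_embC ahom_power)



lemma FR_simps[simp]: "carrier FR = UNIV" "Group.monoid.mult FR = (*)" "Group.monoid.one FR = 1" "ring.zero FR = 0" "ring.add FR = (+)"
  by (simp_all add: FR_def)

lemma ring_FR: "ring FR"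
proof (rule ringI)
  show "abelian_group FR"
    by (rule abelian_groupI) (auto simp: algebra_simps intro: exI[of _ "- x" for x])
  show "monoid FR"
    by (rule monoidI) (auto simp: algebra_simps)
qed (auto simp: algebra_simps)

lemma FR_a_inv: "a_inv FR x = - x"
proof -
  interpret ring FR by (rule ring_FR)
  show ?thesis by (rule minus_equality) auto
qed

lemma FR_inv: "m_inv (add_monoid FR) x = - x"
  using FR_a_inv[unfolded a_inv_def] by simp

lemma subgroup_FR_I:
  assumes "0 \<in> J" "\<And>x y. x \<in> J \<Longrightarrow> y \<in> J \<Longrightarrow> x + y \<in> J"
    "\<And>y. y \<in> J \<Longrightarrow> - y \<in> J"
  shows "subgroup J (add_monoid FR)"
proof -
  interpret ring FR by (rule ring_FR)
  show ?thesis
    by (rule add.subgroupI) (use assms in \<open>auto simp: FR_inv FR_a_inv\<close>)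
qed

lemma ideal_FR_I:
  assumes "0 \<in> J" "\<And>x y. x \<in> J \<Longrightarrow> y \<in> J \<Longrightarrow> x + y \<in> J"
    "\<And>x y. y \<in> J \<Longrightarrow> x * y \<in> J" "\<And>x y. y \<in> J \<Longrightarrow> y * x \<in> J"
  shows "ideal J FR"
proof (rule idealI[OF ring_FR])
  show "subgroup J (add_monoid FR)"
    by (rule subgroup_FR_I) (use assms in auto, metis assms(3) mult_minus1)
qed (use assms in auto)

lemma ideal_FR_D:
  assumes "ideal J FR"
  shows "0 \<in> J" "x \<in> J \<Longrightarrow> y \<in> J \<Longrightarrow> x + y \<in> J"
    "y \<in> J \<Longrightarrow> x * y \<in> J" "y \<in> J \<Longrightarrow> y * x \<in> J"
proof -
  interpret ideal J FR by (rule assms)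
  show "0 \<in> J" using additive_subgroup.zero_closed[OF is_additive_subgroup] by simp
  show "x \<in> J \<Longrightarrow> y \<in> J \<Longrightarrow> x + y \<in> J" using additive_subgroup.a_closed[OF is_additive_subgroup] by simp
  show "y \<in> J \<Longrightarrow> x * y \<in> J" using I_l_closed[of y x] by simp
  show "y \<in> J \<Longrightarrow> y * x \<in> J" using I_r_closed[of y x] by simp
qed

lemma ideal_FR_diff: "ideal J FR \<Longrightarrow> x \<in> J \<Longrightarrow> y \<in> J \<Longrightarrow> x - y \<in> J"
  using ideal_FR_D(2)[of J x "(-1) * y"] ideal_FR_D(3)[of J y "-1"] by simp

lemma ideal_FR_uminus: "ideal J FR \<Longrightarrow> y \<in> J \<Longrightarrow> - y \<in> J"
  using ideal_FR_D(3)[of J y "-1"] by simp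

lemma genideal_FR_ideal: "ideal (genideal FR S) FR"
  using ring.genideal_ideal[OF ring_FR, of S] by simp

lemma genideal_FR_self: "S \<subseteq> genideal FR S"
  using ring.genideal_self[OF ring_FR, of S] by simp

lemma genideal_FR_min: "ideal J FR \<Longrightarrow> S \<subseteq> J \<Longrightarrow> genideal FR S \<subseteq> J"
  unfolding genideal_def by auto

lemma hom_genideal:
  assumes "ahom h" "ideal J FR" "h ` S \<subseteq> J"
  shows "h ` genideal FR S \<subseteq> J"
proof -
  have "ideal {x. h x \<in> J} FR"
  proof (rule ideal_FR_I)
    show "0 \<in> {x. h x \<in> J}" using ahom_0[OF assms(1)] ideal_FR_D(1)[OF assms(2)] by simp
    show "x + y \<in> {x. h x \<in> J}" if "x \<in> {x. h x \<in> J}" "y \<in> {x. h x \<in> J}" for x y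
      using that ahom_add[OF assms(1)] ideal_FR_D(2)[OF assms(2)] by simp
    show "x * y \<in> {x. h x \<in> J}" if "y \<in> {x. h x \<in> J}" for x y
      using that ahom_mult[OF assms(1)] ideal_FR_D(3)[OF assms(2)] by simp
    show "y * x \<in> {x. h x \<in> J}" if "y \<in> {x. h x \<in> J}" for x y
      using that ahom_mult[OF assms(1)] ideal_FR_D(4)[OF assms(2)] by simp
  qed
  then have "genideal FR S \<subseteq> {x. h x \<in> J}"
    using assms by (intro genideal_FR_min) auto
  then show ?thesis by auto
qed




lemma FR_coset: "I +>\<^bsub>FR\<^esub> x = (\<lambda>i. i + x) ` I"
  by (auto simp: a_r_coset_def r_coset_def)

lemma quot_carrier: "carrier (FR Quot I) = range (\<lambda>x. (\<lambda>i. i + x) ` I)"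
  by (auto simp: FactRing_def A_RCOSETS_def RCOSETS_def r_coset_def)

lemma quot_mult: "Group.monoid.mult (FR Quot I) A B = (\<Union>a\<in>A. \<Union>b\<in>B. (\<lambda>i. i + a * b) ` I)"
  by (simp add: FactRing_def rcoset_mult_def FR_coset)

lemma quot_add: "ring.add (FR Quot I) A B = (\<Union>a\<in>A. \<Union>b\<in>B. {a + b})"
  by (simp add: FactRing_def set_add_def set_mult_def)

lemma quot_one: "Group.monoid.one (FR Quot I) = (\<lambda>i. i + 1) ` I"
  by (simp add: FactRing_def FR_coset)

lemma quot_iso:
  assumes h: "ahom \<phi>" "ahom \<psi>" and inv: "\<And>x. \<psi> (\<phi> x) = x" "\<And>x. \<phi> (\<psi> x) = x"
    and IJ: "\<phi> ` I = J"
  shows "alg_iso_quot I J"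
proof -
  have JI: "\<psi> ` J = I" using IJ inv by (auto simp: image_comp image_iff)
  have cos: "\<phi> ` ((\<lambda>i. i + x) ` I) = (\<lambda>j. j + \<phi> x) ` J" for x
    using IJ by (auto simp: image_comp comp_def ahom_add[OF h(1)])
  have cos': "\<psi> ` ((\<lambda>i. i + x) ` J) = (\<lambda>j. j + \<psi> x) ` I" for x
    using JI by (auto simp: image_comp comp_def ahom_add[OF h(2)])
  have "(\<lambda>X. \<phi> ` X) \<in> ring_iso (FR Quot I) (FR Quot J)"
  proof (rule ring_iso_memI)
    show "\<phi> ` X \<in> carrier (FR Quot J)" if "X \<in> carrier (FR Quot I)" for X
      using that by (auto simp: quot_carrier cos)
    show "\<phi> ` (X \<otimes>\<^bsub>FR Quot I\<^esub> Y) = \<phi> ` X \<otimes>\<^bsub>FR Quot J\<^esub> \<phi> ` Y" for X Y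
      by (simp add: quot_mult image_UN cos ahom_mult[OF h(1)])
    show "\<phi> ` (X \<oplus>\<^bsub>FR Quot I\<^esub> Y) = \<phi> ` X \<oplus>\<^bsub>FR Quot J\<^esub> \<phi> ` Y" for X Y
      by (simp add: quot_add image_UN ahom_add[OF h(1)])
    show "\<phi> ` \<one>\<^bsub>FR Quot I\<^esub> = \<one>\<^bsub>FR Quot J\<^esub>"
      by (simp add: quot_one cos ahom_1[OF h(1)])
    show "bij_betw ((`) \<phi>) (carrier (FR Quot I)) (carrier (FR Quot J))"
    proof (rule bij_betw_byWitness[where f' = "\<lambda>X. \<psi> ` X"])
      show "\<forall>a\<in>carrier (FR Quot I). \<psi> ` \<phi> ` a = a" by (simp add: image_comp comp_def inv)
      show "\<forall>a\<in>carrier (FR Quot J). \<phi> ` \<psi> ` a = a" by (simp add: image_comp comp_def inv)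
      show "(`) \<phi> ` carrier (FR Quot I) \<subseteq> carrier (FR Quot J)"
        by (auto simp: quot_carrier cos)
      show "(`) \<psi> ` carrier (FR Quot J) \<subseteq> carrier (FR Quot I)"
        by (auto simp: quot_carrier cos')
    qed
  qed
  moreover have "\<phi> ` (I +>\<^bsub>FR\<^esub> embC c) = J +>\<^bsub>FR\<^esub> embC c" for c
    by (simp add: FR_coset cos ahom_embC[OF h(1)])
  ultimately show ?thesis unfolding alg_iso_quot_def by blast
qed




definition tset :: "freealg set \<Rightarrow> freealg set" where
  "tset S = {a. \<exists>f. f \<noteq> 0 \<and> peval f Hg * a \<in> genideal FR S}"

lemma torsideal_tset: "torsideal a1 a2 p1 p2 = genideal FR (tset (rels a1 a2 p1 p2))"
  by (simp add: torsideal_def relideal_def tset_def)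

lemma tors_dir:
  assumes h: "ahom \<phi>" and S: "\<phi> ` S1 \<subseteq> genideal FR S2"
    and q: "\<phi> Hg = peval q Hg" "degree q > 0"
  shows "\<phi> ` genideal FR (tset S1) \<subseteq> genideal FR (tset S2)"
proof (rule hom_genideal[OF h genideal_FR_ideal])
  have G: "\<phi> ` genideal FR S1 \<subseteq> genideal FR S2"
    by (rule hom_genideal[OF h genideal_FR_ideal S])
  have "\<phi> ` tset S1 \<subseteq> tset S2"
  proof
    fix b assume "b \<in> \<phi> ` tset S1"
    then obtain a f where b: "b = \<phi> a" and f: "f \<noteq> 0" "peval f Hg * a \<in> genideal FR S1"
      by (auto simp: tset_def)
    have "\<phi> (peval f Hg * a) = peval (pcompose f q) Hg * b"
      by (simp add: ahom_mult[OF h] ahom_peval[OF h] q peval_pcompose b)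
    moreover have "pcompose f q \<noteq> 0" using f q pcompose_eq_0 by blast
    ultimately show "b \<in> tset S2" using G f unfolding tset_def by (metis (mono_tags, lifting) image_subset_iff mem_Collect_eq)
  qed
  then show "\<phi> ` tset S1 \<subseteq> genideal FR (tset S2)" using genideal_FR_self by blast
qed

lemma transfer_iso:
  assumes h: "ahom \<phi>" "ahom \<psi>" and inv: "\<And>x. \<psi> (\<phi> x) = x" "\<And>x. \<phi> (\<psi> x) = x"
    and S: "\<phi> ` S1 \<subseteq> genideal FR S2" "\<psi> ` S2 \<subseteq> genideal FR S1"
    and q: "\<phi> Hg = peval q Hg" "degree q > 0" "\<psi> Hg = peval q' Hg" "degree q' > 0"
  shows "alg_iso_quot (genideal FR (tset S1)) (genideal FR (tset S2))"
proof (rule quot_iso[OF h inv])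
  have 1: "\<phi> ` genideal FR (tset S1) \<subseteq> genideal FR (tset S2)"
    by (rule tors_dir[OF h(1) S(1) q(1,2)])
  have 2: "\<psi> ` genideal FR (tset S2) \<subseteq> genideal FR (tset S1)"
    by (rule tors_dir[OF h(2) S(2) q(3,4)])
  show "\<phi> ` genideal FR (tset S1) = genideal FR (tset S2)"
  proof
    show "genideal FR (tset S2) \<subseteq> \<phi> ` genideal FR (tset S1)"
    proof
      fix x assume "x \<in> genideal FR (tset S2)"
      then have "\<psi> x \<in> genideal FR (tset S1)" using 2 by blast
      then show "x \<in> \<phi> ` genideal FR (tset S1)" using inv(2)[of x] by (metis imageI)
    qed
  qed (rule 1)
qed

abbreviation "X1p \<equiv> gen_el GXp1"
abbreviation "X1m \<equiv> gen_el GXm1"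
abbreviation "X2p \<equiv> gen_el GXp2"
abbreviation "X2m \<equiv> gen_el GXm2"

lemma rels_eq: "rels a1 a2 p1 p2 =
  {Hg * X1p - X1p * Hg - embC a1 * X1p, Hg * X1m - X1m * Hg + embC a1 * X1m,
   X1p * X1m - peval p1 (Hg - embC (a1 / 2)), X1m * X1p - peval p1 (Hg + embC (a1 / 2)),
   Hg * X2p - X2p * Hg - embC a2 * X2p, Hg * X2m - X2m * Hg + embC a2 * X2m,
   X2p * X2m - peval p2 (Hg - embC (a2 / 2)), X2m * X2p - peval p2 (Hg + embC (a2 / 2)),
   X1p * X2m - X2m * X1p, X1m * X2p - X2p * X1m}"
  unfolding rels_def by auto

lemma peval_X: "peval [:0, 1:] x = x"
  by (simp add: peval_linear)

fun swg :: "gen \<Rightarrow> gen" where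
  "swg GH = GH" | "swg GXp1 = GXp2" | "swg GXm1 = GXm2" | "swg GXp2 = GXp1" | "swg GXm2 = GXm1"

definition "swp = ext (\<lambda>g. gen_el (swg g))"

lemma swp_gen[simp]: "swp (gen_el g) = gen_el (swg g)" by (simp add: swp_def)
lemma ahom_swp: "ahom swp" by (simp add: swp_def ahom_ext)

lemma swp_swp: "swp (swp x) = x"
proof -
  have "(swp \<circ> swp) x = x"
  proof (rule ahom_id)
    show "ahom (swp \<circ> swp)" by (simp add: ahom_comp ahom_swp)
    show "(swp \<circ> swp) (gen_el g) = gen_el g" for g by (cases g) simp_all
  qed
  then show ?thesis by simp
qed

lemma swp_rels: "swp ` rels a1 a2 p1 p2 \<subseteq> genideal FR (rels a2 a1 p2 p1)"
proof -
  note h = ahom_swp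
  have self: "r \<in> rels a2 a1 p2 p1 \<Longrightarrow> r \<in> genideal FR (rels a2 a1 p2 p1)" for r
    using genideal_FR_self by blast
  have cross: "X2p * X1m - X1m * X2p \<in> genideal FR (rels a2 a1 p2 p1)"
    using ideal_FR_uminus[OF genideal_FR_ideal self[of "X1m * X2p - X2p * X1m"]]
    by (simp add: rels_eq)
  have cross2: "X2m * X1p - X1p * X2m \<in> genideal FR (rels a2 a1 p2 p1)"
    using ideal_FR_uminus[OF genideal_FR_ideal self[of "X1p * X2m - X2m * X1p"]]
    by (simp add: rels_eq)
  show ?thesis
    unfolding rels_eq[of a1 a2 p1 p2]
    by (simp add: ahom_diff[OF h] ahom_add[OF h] ahom_mult[OF h] ahom_embC[OF h] ahom_peval[OF h] cross cross2)
       (intro conjI; rule self; simp add: rels_eq)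
qed

lemma part1: "alg_iso_quot (torsideal a1 a2 p1 p2) (torsideal a2 a1 p2 p1)"
  unfolding torsideal_tset
  by (rule transfer_iso[OF ahom_swp ahom_swp swp_swp swp_swp swp_rels swp_rels, of "[:0,1:]" "[:0,1:]"])
     (simp_all add: peval_X)




lemma alg1: "c \<noteq> 0 \<Longrightarrow> embC c * (H - embC d) * X - X * (embC c * (H - embC d)) - embC a * X
   = embC c * (H * X - X * H - embC (a / c) * X)"
proof -
  assume c: "c \<noteq> 0"
  have 1: "X * (embC c * (H - embC d)) = embC c * (X * H - embC d * X)"
    by (simp add: embC_comm2 right_diff_distrib embC_comm[of d X])
  have 2: "embC c * (H - embC d) * X = embC c * (H * X - embC d * X)"
    by (simp add: mult.assoc left_diff_distrib)
  have 3: "embC a * X = embC c * (embC (a / c) * X)"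
    using c by (simp add: mult.assoc[symmetric] embC_mult[symmetric])
  show ?thesis unfolding 1 2 3 by (simp add: algebra_simps)
qed

lemma alg2: "c \<noteq> 0 \<Longrightarrow> embC c * (H - embC d) * X - X * (embC c * (H - embC d)) + embC a * X
   = embC c * (H * X - X * H + embC (a / c) * X)"
proof -
  assume c: "c \<noteq> 0"
  have 1: "X * (embC c * (H - embC d)) = embC c * (X * H - embC d * X)"
    by (simp add: embC_comm2 right_diff_distrib embC_comm[of d X])
  have 2: "embC c * (H - embC d) * X = embC c * (H * X - embC d * X)"
    by (simp add: mult.assoc left_diff_distrib)
  have 3: "embC a * X = embC c * (embC (a / c) * X)"
    using c by (simp add: mult.assoc[symmetric] embC_mult[symmetric])
  show ?thesis unfolding 1 2 3 by (simp add: algebra_simps)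
qed

lemma alg3: "(embC c * H + embC d) * X - X * (embC c * H + embC d) - embC (c * a) * X
   = embC c * (H * X - X * H - embC a * X)"
proof -
  have 1: "X * (embC c * H + embC d) = embC c * (X * H) + embC d * X"
    by (simp add: embC_comm2 distrib_left embC_comm[of d X])
  have 2: "(embC c * H + embC d) * X = embC c * (H * X) + embC d * X"
    by (simp add: mult.assoc distrib_right)
  have 3: "embC (c * a) * X = embC c * (embC a * X)"
    by (simp add: mult.assoc[symmetric] embC_mult)
  show ?thesis unfolding 1 2 3 by (simp add: algebra_simps)
qed

lemma alg4: "(embC c * H + embC d) * X - X * (embC c * H + embC d) + embC (c * a) * X
   = embC c * (H * X - X * H + embC a * X)"
proof -
  have 1: "X * (embC c * H + embC d) = embC c * (X * H) + embC d * X"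
    by (simp add: embC_comm2 distrib_left embC_comm[of d X])
  have 2: "(embC c * H + embC d) * X = embC c * (H * X) + embC d * X"
    by (simp add: mult.assoc distrib_right)
  have 3: "embC (c * a) * X = embC c * (embC a * X)"
    by (simp add: mult.assoc[symmetric] embC_mult)
  show ?thesis unfolding 1 2 3 by (simp add: algebra_simps)
qed

lemma alg5: "g \<noteq> 0 \<Longrightarrow> peval [:g0, g:] (embC (1/g) * (H - embC g0) - embC b) = H - embC (g * b)"
proof -
  assume g: "g \<noteq> 0"
  have "(embC (1/g) * (H - embC g0) - embC b) * embC g = embC g * (embC (1/g) * (H - embC g0) - embC b)"
    by (rule embC_comm[symmetric])
  also have "\<dots> = (embC g * embC (1/g)) * (H - embC g0) - embC (g * b)"
    by (simp add: right_diff_distrib mult.assoc embC_mult)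
  also have "embC g * embC (1/g) = 1" using g by (simp add: embC_mult[symmetric])
  finally show ?thesis by (simp add: peval_linear)
qed

lemma alg6: "g \<noteq> 0 \<Longrightarrow> peval [:g0, g:] (embC (1/g) * (H - embC g0) + embC b) = H + embC (g * b)"
proof -
  assume g: "g \<noteq> 0"
  have "(embC (1/g) * (H - embC g0) + embC b) * embC g = embC g * (embC (1/g) * (H - embC g0) + embC b)"
    by (rule embC_comm[symmetric])
  also have "\<dots> = (embC g * embC (1/g)) * (H - embC g0) + embC (g * b)"
    by (simp add: distrib_left mult.assoc embC_mult)
  also have "embC g * embC (1/g) = 1" using g by (simp add: embC_mult[symmetric])
  finally show ?thesis by (simp add: peval_linear)
qed

lemma alg7: "peval [:g0, g:] (H - embC b) = embC g * H + embC g0 - embC (g * b)"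
proof -
  have "(H - embC b) * embC g = embC g * (H - embC b)" by (rule embC_comm[symmetric])
  also have "\<dots> = embC g * H - embC (g * b)" by (simp add: right_diff_distrib embC_mult)
  finally show ?thesis by (simp add: peval_linear)
qed

lemma alg8: "peval [:g0, g:] (H + embC b) = embC g * H + embC g0 + embC (g * b)"
proof -
  have "(H + embC b) * embC g = embC g * (H + embC b)" by (rule embC_comm[symmetric])
  also have "\<dots> = embC g * H + embC (g * b)" by (simp add: distrib_left embC_mult)
  finally show ?thesis by (simp add: peval_linear)
qed


definition "dlm g g0 x = (if x = GH then embC (1/g) * (Hg - embC g0) else gen_el x)"
definition "upm g g0 x = (if x = GH then embC g * Hg + embC g0 else gen_el x)"
definition "dl g g0 = ext (dlm g g0)"
definition "up g g0 = ext (upm g g0)"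

lemma ahom_dl: "ahom (dl g g0)" by (simp add: dl_def ahom_ext)
lemma ahom_up: "ahom (up g g0)" by (simp add: up_def ahom_ext)
lemma dl_H: "dl g g0 Hg = embC (1/g) * (Hg - embC g0)" by (simp add: dl_def dlm_def)
lemma up_H: "up g g0 Hg = embC g * Hg + embC g0" by (simp add: up_def upm_def)
lemma dl_X: "x \<noteq> GH \<Longrightarrow> dl g g0 (gen_el x) = gen_el x" by (simp add: dl_def dlm_def)
lemma up_X: "x \<noteq> GH \<Longrightarrow> up g g0 (gen_el x) = gen_el x" by (simp add: up_def upm_def)

lemma up_dl: "g \<noteq> 0 \<Longrightarrow> up g g0 (dl g g0 x) = x"
proof -
  assume g: "g \<noteq> 0"
  have "(up g g0 \<circ> dl g g0) x = x"
  proof (rule ahom_id)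
    show "ahom (up g g0 \<circ> dl g g0)" by (simp add: ahom_comp ahom_up ahom_dl)
    fix x show "(up g g0 \<circ> dl g g0) (gen_el x) = gen_el x"
    proof (cases "x = GH")
      case True
      have "up g g0 (embC (1/g) * (Hg - embC g0)) = (embC (1/g) * embC g) * Hg"
        by (simp add: ahom_mult[OF ahom_up] ahom_diff[OF ahom_up] ahom_embC[OF ahom_up] up_H mult.assoc)
      also have "embC (1/g) * embC g = 1" using g by (simp add: embC_mult[symmetric])
      finally show ?thesis using True by (simp add: dl_H)
    qed (simp add: dl_X up_X)
  qed
  then show ?thesis by simp
qed

lemma dl_up: "g \<noteq> 0 \<Longrightarrow> dl g g0 (up g g0 x) = x"
proof -
  assume g: "g \<noteq> 0"
  have "(dl g g0 \<circ> up g g0) x = x"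
  proof (rule ahom_id)
    show "ahom (dl g g0 \<circ> up g g0)" by (simp add: ahom_comp ahom_up ahom_dl)
    fix x show "(dl g g0 \<circ> up g g0) (gen_el x) = gen_el x"
    proof (cases "x = GH")
      case True
      have "dl g g0 (embC g * Hg + embC g0) = (embC g * embC (1/g)) * (Hg - embC g0) + embC g0"
        by (simp add: ahom_mult[OF ahom_dl] ahom_add[OF ahom_dl] ahom_embC[OF ahom_dl] dl_H mult.assoc)
      also have "embC g * embC (1/g) = 1" using g by (simp add: embC_mult[symmetric])
      finally show ?thesis using True by (simp add: up_H)
    qed (simp add: dl_X up_X)
  qed
  then show ?thesis by simp
qed

lemmas dlh = ahom_mult[OF ahom_dl] ahom_add[OF ahom_dl] ahom_diff[OF ahom_dl] ahom_embC[OF ahom_dl] ahom_peval[OF ahom_dl]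
lemmas uph = ahom_mult[OF ahom_up] ahom_add[OF ahom_up] ahom_diff[OF ahom_up] ahom_embC[OF ahom_up] ahom_peval[OF ahom_up]

lemma dl_r1: "g \<noteq> 0 \<Longrightarrow> dl g g0 X = X \<Longrightarrow>
  dl g g0 (Hg * X - X * Hg - embC a * X) = embC (1/g) * (Hg * X - X * Hg - embC (g * a) * X)"
  using alg1[of "1/g" Hg g0 X a] by (simp add: dlh dl_H mult.commute)

lemma dl_r2: "g \<noteq> 0 \<Longrightarrow> dl g g0 X = X \<Longrightarrow>
  dl g g0 (Hg * X - X * Hg + embC a * X) = embC (1/g) * (Hg * X - X * Hg + embC (g * a) * X)"
  using alg2[of "1/g" Hg g0 X a] by (simp add: dlh dl_H mult.commute)

lemma dl_r3: "g \<noteq> 0 \<Longrightarrow> dl g g0 X = X \<Longrightarrow> dl g g0 Y = Y \<Longrightarrow>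
  dl g g0 (X * Y - peval (pcompose p [:g0, g:]) (Hg - embC (a / 2))) = X * Y - peval p (Hg - embC (g * a / 2))"
  using alg5[of g g0 Hg "a/2"] by (simp add: dlh dl_H peval_pcompose)

lemma dl_r4: "g \<noteq> 0 \<Longrightarrow> dl g g0 X = X \<Longrightarrow> dl g g0 Y = Y \<Longrightarrow>
  dl g g0 (X * Y - peval (pcompose p [:g0, g:]) (Hg + embC (a / 2))) = X * Y - peval p (Hg + embC (g * a / 2))"
  using alg6[of g g0 Hg "a/2"] by (simp add: dlh dl_H peval_pcompose)

lemma up_r1: "up g g0 X = X \<Longrightarrow>
  up g g0 (Hg * X - X * Hg - embC (g * a) * X) = embC g * (Hg * X - X * Hg - embC a * X)"
  using alg3[of g Hg g0 X a] by (simp add: uph up_H)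

lemma up_r2: "up g g0 X = X \<Longrightarrow>
  up g g0 (Hg * X - X * Hg + embC (g * a) * X) = embC g * (Hg * X - X * Hg + embC a * X)"
  using alg4[of g Hg g0 X a] by (simp add: uph up_H)

lemma up_r3: "up g g0 X = X \<Longrightarrow> up g g0 Y = Y \<Longrightarrow>
  up g g0 (X * Y - peval p (Hg - embC (g * a / 2))) = X * Y - peval (pcompose p [:g0, g:]) (Hg - embC (a / 2))"
  using alg7[of g0 g Hg "a/2"] by (simp add: uph up_H peval_pcompose)

lemma up_r4: "up g g0 X = X \<Longrightarrow> up g g0 Y = Y \<Longrightarrow>
  up g g0 (X * Y - peval p (Hg + embC (g * a / 2))) = X * Y - peval (pcompose p [:g0, g:]) (Hg + embC (a / 2))"
  using alg8[of g0 g Hg "a/2"] by (simp add: uph up_H peval_pcompose)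


lemma dl_rels:
  assumes g: "g \<noteq> 0"
  shows "dl g g0 ` rels a1 a2 (pcompose p1 [:g0, g:]) (pcompose p2 [:g0, g:]) \<subseteq> genideal FR (rels (g * a1) (g * a2) p1 p2)"
proof -
  let ?G = "genideal FR (rels (g * a1) (g * a2) p1 p2)"
  have self: "r \<in> rels (g * a1) (g * a2) p1 p2 \<Longrightarrow> r \<in> ?G" for r
    using genideal_FR_self by blast
  have sc: "r \<in> rels (g * a1) (g * a2) p1 p2 \<Longrightarrow> embC c * r \<in> ?G" for r c
    using ideal_FR_D(3)[OF genideal_FR_ideal self] by blast
  have cross: "dl g g0 (X * Y - Y * X) = X * Y - Y * X" if "dl g g0 X = X" "dl g g0 Y = Y" for X Y
    using that by (simp add: dlh)
  show ?thesis
    unfolding rels_eq[of a1 a2]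
    by (simp add: g dl_r1 dl_r2 dl_r3 dl_r4 dl_X cross)
       (intro conjI; ((rule sc, unfold rels_eq, blast) | (rule self, unfold rels_eq, blast)))
qed

lemma up_rels:
  shows "up g g0 ` rels (g * a1) (g * a2) p1 p2 \<subseteq> genideal FR (rels a1 a2 (pcompose p1 [:g0, g:]) (pcompose p2 [:g0, g:]))"
proof -
  let ?G = "genideal FR (rels a1 a2 (pcompose p1 [:g0, g:]) (pcompose p2 [:g0, g:]))"
  have self: "r \<in> rels a1 a2 (pcompose p1 [:g0, g:]) (pcompose p2 [:g0, g:]) \<Longrightarrow> r \<in> ?G" for r
    using genideal_FR_self by blast
  have sc: "r \<in> rels a1 a2 (pcompose p1 [:g0, g:]) (pcompose p2 [:g0, g:]) \<Longrightarrow> embC c * r \<in> ?G" for r c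
    using ideal_FR_D(3)[OF genideal_FR_ideal self] by blast
  have cross: "up g g0 (X * Y - Y * X) = X * Y - Y * X" if "up g g0 X = X" "up g g0 Y = Y" for X Y
    using that by (simp add: uph)
  show ?thesis
    unfolding rels_eq[of "g * a1" "g * a2"]
    by (simp add: up_r1 up_r2 up_r3 up_r4 up_X cross)
       (intro conjI; ((rule sc, unfold rels_eq, blast) | (rule self, unfold rels_eq, blast)))
qed

lemma part2:
  assumes g: "g \<noteq> 0"
  shows "alg_iso_quot (torsideal a1 a2 (p1 \<circ>\<^sub>p [:g0, g:]) (p2 \<circ>\<^sub>p [:g0, g:])) (torsideal (g * a1) (g * a2) p1 p2)"
  unfolding torsideal_tset
proof (rule transfer_iso[OF ahom_dl ahom_up up_dl[OF g] dl_up[OF g] dl_rels[OF g] up_rels])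
  show "dl g g0 Hg = peval [:- g0 / g, 1 / g:] Hg"
  proof -
    have 1: "Hg * embC (1/g) = embC (1/g) * Hg" by (rule embC_comm[symmetric])
    have 2: "embC (1/g) * (Hg - embC g0) = embC (1/g) * Hg - embC (g0 / g)"
      by (simp add: right_diff_distrib embC_mult[symmetric])
    show ?thesis unfolding dl_H peval_linear 1 2 by (simp add: embC_uminus)
  qed
  show "up g g0 Hg = peval [:g0, g:] Hg"
    unfolding up_H peval_linear embC_comm[of g Hg] by (simp add: add.commute)
qed (use g in simp_all)


theorem mainTheorem14:
  fixes a1 a2 :: complex and p1 p2 :: "complex poly"
  assumes "p1 \<noteq> 0" and "p2 \<noteq> 0"
  shows "alg_iso_quot (torsideal a1 a2 p1 p2) (torsideal a2 a1 p2 p1) \<and>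
         (\<forall>\<gamma> \<gamma>0. \<gamma> \<noteq> 0 \<longrightarrow>
           alg_iso_quot (torsideal a1 a2 (p1 \<circ>\<^sub>p [:\<gamma>0, \<gamma>:]) (p2 \<circ>\<^sub>p [:\<gamma>0, \<gamma>:]))
                        (torsideal (\<gamma> * a1) (\<gamma> * a2) p1 p2))"
  using part1 part2 by blast

end
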